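(* Let $\mathcal{H}$ be an infinite-dimensional complex separable Hilbert space, $A\in\mathcal{B}(\mathcal{H})$ normal with scalar spectral measure $\mu$, and $\mathcal{G}\subset\mathcal{H}$ finite such that $\{e^{tA}g\}_{g\in\mathcal{G},\,t\in[0,\infty)}$ is a semi-continuous frame for $\mathcal{H}$. Then for every $\varepsilon>0$, $\mu(\{z\in\mathbb{C}:\mathrm{Re}(z)>-\varepsilon\})>0$.
   Context: The scalar spectral measure of a normal $A$ is a nonnegative Borel measure $\mu$ mutually absolutely continuous with $\sum_j\mu_j$, where $\mu_j$ ($j\in\mathbb{N}\cup\{\infty\}$) are the mutually singular measures of the spectral theorem with multiplicity ($A$ unitarily equivalent to $N_{\mu_\infty}^{(\infty)}\oplus N_{\mu_1}\oplus N_{\mu_2}^{(2)}\oplus\cdots$, with $N_\mu$ multiplication by $z$ on $L^2(\mu)$). $e^{tA}:=\sum_{n\ge0}\frac{t^n}{n!}A^n$. For a countable $\mathcal{G}\subset\mathcal{H}$ and an interval $\mathcal{T}\subset[0,\infty)$, $\{e^{tA}g\}_{g\in\mathcal{G},t\in\mathcal{T}}$ is a semi-continuous frame for $\mathcal{H}$ if there are constants $c,C>0$ such that $c\|f\|^2\le\sum_{g\in\mathcal{G}}\int_{\mathcal{T}}|\langle f,e^{tA}g\rangle|^2\,dt\le C\|f\|^2$ for all $f\in\mathcal{H}$. *)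

theory Defs
  imports "HOL-Analysis.Analysis"
begin

class chilbert = banach +
  fixes hscale :: "complex \<Rightarrow> 'a \<Rightarrow> 'a"
    and hinner :: "'a \<Rightarrow> 'a \<Rightarrow> complex"
  assumes hscale_of_real: "hscale (complex_of_real r) x = r *\<^sub>R x"
    and hscale_add_right: "hscale a (x + y) = hscale a x + hscale a y"
    and hscale_add_left: "hscale (a + b) x = hscale a x + hscale b x"
    and hscale_assoc: "hscale a (hscale b x) = hscale (a * b) x"
    and hinner_add_left: "hinner (x + y) z = hinner x z + hinner y z"
    and hinner_hscale_left: "hinner (hscale a x) y = a * hinner x y"
    and hinner_commute: "hinner x y = cnj (hinner y x)"
    and norm_hinner: "norm x = sqrt (Re (hinner x x))"

definition separable_hilbert :: "'a::chilbert itself \<Rightarrow> bool" where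
  "separable_hilbert _ \<longleftrightarrow> (\<exists>D::'a set. countable D \<and> closure D = UNIV)"

definition cspan :: "'a::chilbert set \<Rightarrow> 'a set" where
  "cspan S = {\<Sum>v\<in>T. hscale (c v) v | T c. finite T \<and> T \<subseteq> S}"

definition infinite_dimensional :: "'a::chilbert itself \<Rightarrow> bool" where
  "infinite_dimensional _ \<longleftrightarrow> (\<forall>S::'a set. finite S \<longrightarrow> cspan S \<noteq> UNIV)"

definition bounded_clinear_op :: "('a::chilbert \<Rightarrow> 'a) \<Rightarrow> bool" where
  "bounded_clinear_op A \<longleftrightarrow>
     (\<forall>x y. A (x + y) = A x + A y) \<and> (\<forall>c x. A (hscale c x) = hscale c (A x)) \<and>
     (\<exists>K. \<forall>x. norm (A x) \<le> K * norm x)"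

definition is_adjoint :: "('a::chilbert \<Rightarrow> 'a) \<Rightarrow> ('a \<Rightarrow> 'a) \<Rightarrow> bool" where
  "is_adjoint A B \<longleftrightarrow> (\<forall>x y. hinner (A x) y = hinner x (B y))"

definition normal_op :: "('a::chilbert \<Rightarrow> 'a) \<Rightarrow> bool" where
  "normal_op A \<longleftrightarrow> (\<exists>B. is_adjoint A B \<and> A \<circ> B = B \<circ> A)"

definition expA :: "('a::chilbert \<Rightarrow> 'a) \<Rightarrow> real \<Rightarrow> 'a \<Rightarrow> 'a" where
  "expA A t g = (\<Sum>n. (t ^ n / fact n) *\<^sub>R (A ^^ n) g)"

definition semi_continuous_frame ::
    "('a::chilbert \<Rightarrow> 'a) \<Rightarrow> 'a set \<Rightarrow> real set \<Rightarrow> bool" where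
  "semi_continuous_frame A G T \<longleftrightarrow>
     (\<exists>c C. c > 0 \<and> C > 0 \<and> (\<forall>f.
        ennreal (c * (norm f)\<^sup>2)
          \<le> (\<Sum>g\<in>G. \<integral>\<^sup>+ t\<in>T. ennreal ((cmod (hinner f (expA A t g)))\<^sup>2) \<partial>lborel) \<and>
        (\<Sum>g\<in>G. \<integral>\<^sup>+ t\<in>T. ennreal ((cmod (hinner f (expA A t g)))\<^sup>2) \<partial>lborel)
          \<le> ennreal (C * (norm f)\<^sup>2)))"

text \<open>Multiplicity indices \<open>j \<in> \<nat> \<union> {\<infinity>}\<close>: \<open>None\<close> stands for \<open>\<infinity>\<close>,
  \<open>Some n\<close> (with \<open>n \<ge> 1\<close>) for multiplicity \<open>n\<close>. The \<open>j\<close>-th summand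
  \<open>N_{\<mu>_j}^{(j)}\<close> consists of the copies \<open>k \<in> mult_copies j\<close> of \<open>L\<^sup>2(\<mu>_j)\<close>.\<close>

definition mult_indices :: "nat option set" where
  "mult_indices = insert None (Some ` {1..})"

fun mult_copies :: "nat option \<Rightarrow> nat set" where
  "mult_copies None = UNIV"
| "mult_copies (Some n) = {..<n}"

definition model_index :: "(nat option \<times> nat) set" where
  "model_index = {(j, k). j \<in> mult_indices \<and> k \<in> mult_copies j}"

definition model_norm2 ::
    "(nat option \<Rightarrow> complex measure) \<Rightarrow> (nat option \<Rightarrow> nat \<Rightarrow> complex \<Rightarrow> complex) \<Rightarrow> ennreal" where
  "model_norm2 \<mu>s F =
     (\<integral>\<^sup>+ p. (\<integral>\<^sup>+ z. ennreal ((cmod (F (fst p) (snd p) z))\<^sup>2) \<partial>\<mu>s (fst p)) \<partial>count_space model_index)"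

definition model_measurable ::
    "(nat option \<Rightarrow> complex measure) \<Rightarrow> (nat option \<Rightarrow> nat \<Rightarrow> complex \<Rightarrow> complex) \<Rightarrow> bool" where
  "model_measurable \<mu>s F \<longleftrightarrow>
     (\<forall>(j, k) \<in> model_index. F j k \<in> borel_measurable (\<mu>s j))"

text \<open>\<open>A\<close> is unitarily equivalent, via \<open>U\<close>, to
  \<open>N_{\<mu>_\<infinity>}^{(\<infinity>)} \<oplus> N_{\<mu>_1} \<oplus> N_{\<mu>_2}^{(2)} \<oplus> \<dots>\<close>:
  \<open>U\<close> is linear, isometric and onto the model space (elements of \<open>L\<^sup>2\<close> being
  identified when equal a.e.), and intertwines \<open>A\<close> with multiplication by \<open>z\<close>.\<close>

definition unitarily_equivalent_model ::
    "('a::chilbert \<Rightarrow> 'a) \<Rightarrow> (nat option \<Rightarrow> complex measure) \<Rightarrow> bool" where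
  "unitarily_equivalent_model A \<mu>s \<longleftrightarrow>
     (\<exists>U :: 'a \<Rightarrow> nat option \<Rightarrow> nat \<Rightarrow> complex \<Rightarrow> complex.
        (\<forall>x. model_measurable \<mu>s (U x)) \<and>
        (\<forall>x y. \<forall>(j, k) \<in> model_index.
            AE z in \<mu>s j. U (x + y) j k z = U x j k z + U y j k z) \<and>
        (\<forall>c x. \<forall>(j, k) \<in> model_index.
            AE z in \<mu>s j. U (hscale c x) j k z = c * U x j k z) \<and>
        (\<forall>x. model_norm2 \<mu>s (U x) = ennreal ((norm x)\<^sup>2)) \<and>
        (\<forall>F. model_measurable \<mu>s F \<and> model_norm2 \<mu>s F < \<infinity> \<longrightarrow>
            (\<exists>x. \<forall>(j, k) \<in> model_index. AE z in \<mu>s j. U x j k z = F j k z)) \<and>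
        (\<forall>x. \<forall>(j, k) \<in> model_index.
            AE z in \<mu>s j. U (A x) j k z = z * U x j k z))"

definition mutually_singular :: "complex measure \<Rightarrow> complex measure \<Rightarrow> bool" where
  "mutually_singular \<mu> \<nu> \<longleftrightarrow>
     (\<exists>S \<in> sets borel. emeasure \<mu> S = 0 \<and> emeasure \<nu> (UNIV - S) = 0)"

text \<open>\<open>\<mu>\<close> is a scalar spectral measure of \<open>A\<close>: a nonnegative Borel measure
  mutually absolutely continuous with \<open>\<Sum>_j \<mu>_j\<close>, where the \<open>\<mu>_j\<close> are the
  mutually singular (finite Borel) measures of the spectral theorem with multiplicity.
  A Borel set is \<open>\<Sum>_j \<mu>_j\<close>-null iff it is \<open>\<mu>_j\<close>-null for every \<open>j\<close>.\<close>

definition scalar_spectral_measure ::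
    "('a::chilbert \<Rightarrow> 'a) \<Rightarrow> complex measure \<Rightarrow> bool" where
  "scalar_spectral_measure A \<mu> \<longleftrightarrow>
     sets \<mu> = sets borel \<and>
     (\<exists>\<mu>s. (\<forall>j \<in> mult_indices. finite_measure (\<mu>s j) \<and> sets (\<mu>s j) = sets borel) \<and>
          (\<forall>i \<in> mult_indices. \<forall>j \<in> mult_indices. i \<noteq> j \<longrightarrow> mutually_singular (\<mu>s i) (\<mu>s j)) \<and>
          unitarily_equivalent_model A \<mu>s \<and>
          (\<forall>\<Delta> \<in> sets borel. emeasure \<mu> \<Delta> = 0 \<longleftrightarrow> (\<forall>j \<in> mult_indices. emeasure (\<mu>s j) \<Delta> = 0)))"

end

theory Submission imports Defs begin

lemma hscale_one[simp]: "hscale 1 x = x"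
  using hscale_of_real[of 1 x] by simp
lemma hscale_zero_left[simp]: "hscale 0 x = 0"
  using hscale_of_real[of 0 x] by simp
lemma hscale_zero_right[simp]: "hscale a 0 = 0"
  using hscale_add_right[of a 0 0] by simp
lemma hscale_minus_right: "hscale a (- x) = - hscale a x"
  using hscale_add_right[of a x "-x"] by (simp add: add_eq_0_iff)
lemma hscale_diff_right: "hscale a (x - y) = hscale a x - hscale a y"
  using hscale_add_right[of a x "-y"] by (simp add: hscale_minus_right)
lemma hscale_sum_right: "hscale a (\<Sum>i\<in>I. f i) = (\<Sum>i\<in>I. hscale a (f i))"
  by (induction I rule: infinite_finite_induct) (auto simp: hscale_add_right)

lemma hinner_zero_left[simp]: "hinner 0 y = 0"
  using hinner_add_left[of 0 0 y] by simp
lemma hinner_zero_right[simp]: "hinner x 0 = 0"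
  using hinner_commute[of x 0] by simp
lemma hinner_add_right: "hinner x (y + z) = hinner x y + hinner x z"
  by (metis complex_cnj_add hinner_add_left hinner_commute)
lemma hinner_minus_left: "hinner (- x) y = - hinner x y"
  using hinner_add_left[of x "-x" y] by (simp add: add_eq_0_iff)
lemma hinner_diff_left: "hinner (x - y) z = hinner x z - hinner y z"
  using hinner_add_left[of x "-y" z] by (simp add: hinner_minus_left)
lemma hinner_minus_right: "hinner x (- y) = - hinner x y"
  by (metis complex_cnj_minus hinner_commute hinner_minus_left)
lemma hinner_diff_right: "hinner x (y - z) = hinner x y - hinner x z"
  using hinner_add_right[of x y "-z"] by (simp add: hinner_minus_right)
lemma hinner_hscale_right: "hinner x (hscale a y) = cnj a * hinner x y"
  by (metis complex_cnj_mult hinner_commute hinner_hscale_left)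
lemma hinner_scaleR_right: "hinner x (r *\<^sub>R y) = of_real r * hinner x y"
  by (metis hinner_hscale_right hscale_of_real complex_cnj_complex_of_real)
lemma hinner_sum_left: "hinner (\<Sum>i\<in>I. f i) y = (\<Sum>i\<in>I. hinner (f i) y)"
  by (induction I rule: infinite_finite_induct) (auto simp: hinner_add_left)
lemma hinner_sum_right: "hinner x (\<Sum>i\<in>I. f i) = (\<Sum>i\<in>I. hinner x (f i))"
  by (induction I rule: infinite_finite_induct) (auto simp: hinner_add_right)

lemma hinner_self: "hinner x x = complex_of_real ((norm x)\<^sup>2)"
proof -
  have im: "Im (hinner x x) = 0" using hinner_commute[of x x]
    by (metis cnj.simps(2) complex.expand minus_complex.simps(2) diff_self neg_equal_zero)
  have "sqrt (Re (hinner x x)) \<ge> 0" by (metis norm_ge_zero norm_hinner)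
  hence "Re (hinner x x) \<ge> 0" by (metis real_sqrt_ge_0_iff)
  hence "Re (hinner x x) = (norm x)\<^sup>2" using norm_hinner[of x] by simp
  with im show ?thesis by (simp add: complex_eq_iff)
qed

lemma hinner_hscale_both: "hinner (hscale a y) (hscale a y) = complex_of_real ((cmod a)\<^sup>2 * (norm y)\<^sup>2)"
proof -
  have "hinner (hscale a y) (hscale a y) = a * (cnj a * hinner y y)"
    by (simp add: hinner_hscale_left hinner_hscale_right)
  also have "\<dots> = (a * cnj a) * hinner y y" by simp
  also have "a * cnj a = complex_of_real ((cmod a)\<^sup>2)" by (metis complex_norm_square of_real_power)
  finally show ?thesis by (simp add: hinner_self)
qed
lemma Re_hinner_self: "Re (hinner x x) = (norm x)\<^sup>2" by (simp add: hinner_self)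

lemma hinner_self_eq_0: "hinner x x = 0 \<longleftrightarrow> x = 0"
  by (simp add: hinner_self)

definition orthonormal :: "(nat \<Rightarrow> 'a::chilbert) \<Rightarrow> nat \<Rightarrow> bool" where
  "orthonormal e N \<longleftrightarrow> (\<forall>i<N. \<forall>j<N. hinner (e i) (e j) = (if i = j then 1 else 0))"

lemma orthonormal_norm: "orthonormal e N \<Longrightarrow> i < N \<Longrightarrow> norm (e i) = 1"
  unfolding orthonormal_def using norm_hinner[of "e i"] by auto

lemma bessel:
  fixes x :: "'a::chilbert"
  assumes "orthonormal e N"
  shows "(\<Sum>k<N. (cmod (hinner x (e k)))\<^sup>2) \<le> (norm x)\<^sup>2"
proof -
  define c where "c k = hinner x (e k)" for k
  define y where "y = (\<Sum>k<N. hscale (c k) (e k))"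
  define w where "w = x - y"
  have ye: "hinner y (e j) = c j" if "j < N" for j
  proof -
    have "hinner y (e j) = (\<Sum>k<N. c k * hinner (e k) (e j))"
      unfolding y_def by (simp add: hinner_sum_left hinner_hscale_left)
    also have "\<dots> = (\<Sum>k<N. if k = j then c k else 0)"
      using assms that unfolding orthonormal_def by (intro sum.cong) auto
    also have "\<dots> = c j" using that by simp
    finally show ?thesis .
  qed
  have we: "hinner w (e j) = 0" if "j < N" for j
    using ye[OF that] unfolding w_def c_def by (simp add: hinner_diff_left)
  have wy: "hinner w y = 0"
    unfolding y_def by (simp add: hinner_sum_right hinner_hscale_right we)
  have yw: "hinner y w = 0" using wy hinner_commute[of y w] by simp
  have yy: "hinner y y = (\<Sum>k<N. complex_of_real ((cmod (c k))\<^sup>2))"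
  proof -
    have "hinner y y = (\<Sum>k<N. cnj (c k) * hinner y (e k))"
      by (subst (2) y_def) (simp add: hinner_sum_right hinner_hscale_right)
    also have "\<dots> = (\<Sum>k<N. cnj (c k) * c k)" by (intro sum.cong) (auto simp: ye)
    also have "\<dots> = (\<Sum>k<N. complex_of_real ((cmod (c k))\<^sup>2))"
      by (intro sum.cong refl) (metis complex_norm_square mult.commute of_real_power)
    finally show ?thesis .
  qed
  have "x = w + y" unfolding w_def by simp
  hence "hinner x x = hinner w w + hinner w y + hinner y w + hinner y y"
    by (simp add: hinner_add_left hinner_add_right)
  hence "hinner x x = hinner w w + (\<Sum>k<N. complex_of_real ((cmod (c k))\<^sup>2))"
    by (simp add: wy yw yy)
  hence "Re (hinner x x) = Re (hinner w w) + (\<Sum>k<N. (cmod (c k))\<^sup>2)"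
    by (simp add: Re_sum)
  hence "(norm x)\<^sup>2 = (norm w)\<^sup>2 + (\<Sum>k<N. (cmod (c k))\<^sup>2)"
    by (simp only: Re_hinner_self)
  thus ?thesis unfolding c_def by (smt (verit) zero_le_power2)
qed

lemma cauchy_schwarz: "cmod (hinner x y) \<le> norm x * norm y"
proof (cases "y = 0")
  case False
  define e where "e = (\<lambda>_::nat. hscale (complex_of_real (1 / norm y)) y)"
  have "hinner (e 0) (e 0) = 1"
    using False unfolding e_def hinner_hscale_both by (simp add: norm_divide power_divide)
  hence on: "orthonormal e 1" unfolding orthonormal_def by auto
  from bessel[OF on, of x] have "(cmod (hinner x (e 0)))\<^sup>2 \<le> (norm x)\<^sup>2" by simp
  hence "cmod (hinner x (e 0)) \<le> norm x" using power2_le_imp_le by force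
  moreover have "cmod (hinner x (e 0)) = cmod (hinner x y) / norm y"
    by (simp add: e_def hinner_hscale_right norm_mult norm_divide)
  ultimately show ?thesis using False by (simp add: divide_le_eq mult.commute)
qed simp

lemma orthonormal_exists:
  assumes inf: "infinite_dimensional TYPE('a::chilbert)"
  shows "\<exists>e::nat \<Rightarrow> 'a. orthonormal e N"
proof (induction N)
  case 0
  then show ?case by (simp add: orthonormal_def)
next
  case (Suc N)
  then obtain e :: "nat \<Rightarrow> 'a" where e: "orthonormal e N" by blast
  have "cspan (e ` {..<N}) \<noteq> UNIV" using inf unfolding infinite_dimensional_def by blast
  then obtain v where v: "v \<notin> cspan (e ` {..<N})" by blast
  define w where "w = v - (\<Sum>i<N. hscale (hinner v (e i)) (e i))"
  have we: "hinner w (e j) = 0" if "j < N" for j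
  proof -
    have "hinner (\<Sum>i<N. hscale (hinner v (e i)) (e i)) (e j) = (\<Sum>i<N. hinner v (e i) * hinner (e i) (e j))"
      by (simp add: hinner_sum_left hinner_hscale_left)
    also have "\<dots> = (\<Sum>i<N. if i = j then hinner v (e i) else 0)"
      using e that unfolding orthonormal_def by (intro sum.cong) auto
    finally have "hinner (\<Sum>i<N. hscale (hinner v (e i)) (e i)) (e j) = hinner v (e j)"
      using that by simp
    thus ?thesis using that unfolding w_def by (simp add: hinner_diff_left)
  qed
  have inj: "inj_on e {..<N}"
  proof
    fix i j assume "i \<in> {..<N}" "j \<in> {..<N}" "e i = e j"
    thus "i = j" using e unfolding orthonormal_def by (metis lessThan_iff zero_neq_one)
  qed
  have "w \<noteq> 0"
  proof
    assume "w = 0"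
    hence "v = (\<Sum>i<N. hscale (hinner v (e i)) (e i))" unfolding w_def by simp
    also have "\<dots> = (\<Sum>u\<in>e ` {..<N}. hscale (hinner v u) u)"
      using sum.reindex[OF inj, of "\<lambda>u. hscale (hinner v u) u"] by simp
    finally have "v \<in> cspan (e ` {..<N})" unfolding cspan_def by blast
    with v show False by simp
  qed
  define e' where "e' = e(N := hscale (complex_of_real (1 / norm w)) w)"
  have nn: "hinner (e' N) (e' N) = 1"
    using \<open>w \<noteq> 0\<close> unfolding e'_def by (simp add: hinner_hscale_both norm_divide power_divide)
  have c1: "hinner (e' N) (e' j) = 0" if "j < N" for j
    using that by (simp add: e'_def hinner_hscale_left we)
  have c2: "hinner (e' j) (e' N) = 0" if "j < N" for j
    using c1[OF that] hinner_commute[of "e' j" "e' N"] by simp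
  have "orthonormal e' (Suc N)"
    unfolding orthonormal_def
  proof (intro allI impI)
    fix i j assume "i < Suc N" "j < Suc N"
    then consider "i < N" "j < N" | "i = N" "j < N" | "i < N" "j = N" | "i = N" "j = N" by linarith
    thus "hinner (e' i) (e' j) = (if i = j then 1 else 0)"
    proof cases
      case 1 thus ?thesis using e unfolding orthonormal_def e'_def by auto
    qed (use c1 c2 nn in auto)
  qed
  thus ?case by blast
qed


lemma hinner_bounded_linear: "bounded_linear (\<lambda>x. hinner f x)"
proof (rule bounded_linear_intro[of _ "norm f"])
  show "hinner f (x + y) = hinner f x + hinner f y" for x y by (rule hinner_add_right)
  show "hinner f (r *\<^sub>R x) = r *\<^sub>R hinner f x" for r x
    by (simp add: hinner_scaleR_right scaleR_conv_of_real)
  show "norm (hinner f x) \<le> norm x * norm f" for x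
    using cauchy_schwarz[of f x] by (simp add: mult.commute)
qed

locale bop =
  fixes A :: "'a::chilbert \<Rightarrow> 'a"
  assumes bcl: "bounded_clinear_op A"
begin

lemma add: "A (x + y) = A x + A y"
  using bcl unfolding bounded_clinear_op_def by blast
lemma hscale: "A (hscale c x) = hscale c (A x)"
  using bcl unfolding bounded_clinear_op_def by blast
lemma scaleR: "A (r *\<^sub>R x) = r *\<^sub>R A x"
  using hscale[of "complex_of_real r" x] by (simp add: hscale_of_real)

lemma op_bound: obtains K where "K \<ge> 0" "\<And>x. norm (A x) \<le> K * norm x"
proof -
  obtain K where K: "\<And>x. norm (A x) \<le> K * norm x"
    using bcl unfolding bounded_clinear_op_def by blast
  have "norm (A x) \<le> max K 0 * norm x" for x
    using K[of x] by (smt (verit) mult_right_mono norm_ge_zero)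
  then show ?thesis by (intro that[of "max K 0"]) auto
qed

lemma pow_bound:
  assumes "K \<ge> 0" "\<And>x. norm (A x) \<le> K * norm x"
  shows "norm ((A ^^ n) x) \<le> K ^ n * norm x"
proof (induction n)
  case (Suc n)
  have "norm ((A ^^ Suc n) x) \<le> K * norm ((A ^^ n) x)" using assms(2) by simp
  also have "\<dots> \<le> K * (K ^ n * norm x)" using Suc assms(1) by (rule mult_left_mono)
  finally show ?case by simp
qed simp

definition S :: "real \<Rightarrow> 'a \<Rightarrow> nat \<Rightarrow> 'a" where
  "S t g n = (\<Sum>m<n. (t ^ m / fact m) *\<^sub>R (A ^^ m) g)"

lemma summable_expA: "summable (\<lambda>n. (t ^ n / fact n) *\<^sub>R (A ^^ n) g)"
proof -
  obtain K where K: "K \<ge> 0" "\<And>x. norm (A x) \<le> K * norm x" using op_bound by blast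
  have sg: "summable (\<lambda>n. (\<bar>t\<bar> * K) ^ n / fact n * norm g)"
    by (intro summable_mult2) (simp add: summable_exp divide_inverse mult.commute)
  have bnd: "norm (norm ((t ^ n / fact n) *\<^sub>R (A ^^ n) g)) \<le> (\<bar>t\<bar> * K) ^ n / fact n * norm g" for n
  proof -
    have "norm ((t ^ n / fact n) *\<^sub>R (A ^^ n) g) = \<bar>t\<bar> ^ n / fact n * norm ((A ^^ n) g)"
      by (simp add: power_abs)
    also have "\<dots> \<le> \<bar>t\<bar> ^ n / fact n * (K ^ n * norm g)"
      by (intro mult_left_mono pow_bound K) auto
    finally show ?thesis by (simp add: power_mult_distrib)
  qed
  have "summable (\<lambda>n. norm ((t ^ n / fact n) *\<^sub>R (A ^^ n) g))"
    by (rule summable_comparison_test[OF _ sg]) (use bnd in blast)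
  thus ?thesis by (rule summable_norm_cancel)
qed

lemma S_tendsto: "S t g \<longlonglongrightarrow> expA A t g"
  unfolding S_def expA_def by (rule summable_LIMSEQ[OF summable_expA])

lemma hinner_S: "hinner f (S t g n) = (\<Sum>m<n. complex_of_real (t ^ m / fact m) * hinner f ((A ^^ m) g))"
  unfolding S_def by (simp add: hinner_sum_right hinner_scaleR_right)

lemma hinner_expA_measurable:
  "(\<lambda>t. hinner f (expA A t g)) \<in> borel_measurable lborel"
proof (rule borel_measurable_LIMSEQ_metric)
  show "(\<lambda>n. hinner f (S t g n)) \<longlonglongrightarrow> hinner f (expA A t g)" for t
    using bounded_linear.tendsto[OF hinner_bounded_linear S_tendsto] .
  show "(\<lambda>t. hinner f (S t g n)) \<in> borel_measurable lborel" for n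
    unfolding hinner_S by (subst measurable_lborel2) (intro borel_measurable_continuous_onI continuous_intros; simp)
qed

lemma integrand_measurable:
  "(\<lambda>t. ennreal ((cmod (hinner f (expA A t g)))\<^sup>2)) \<in> borel_measurable lborel"
  by (intro measurable_compose[OF _ measurable_ennreal] borel_measurable_continuous_on[OF _ hinner_expA_measurable])
     (intro continuous_intros)

end

locale model = bop A for A :: "'a::chilbert \<Rightarrow> 'a" +
  fixes \<mu>s :: "nat option \<Rightarrow> complex measure"
    and U :: "'a \<Rightarrow> nat option \<Rightarrow> nat \<Rightarrow> complex \<Rightarrow> complex"
  assumes meas: "\<And>x. model_measurable \<mu>s (U x)"
    and Uadd: "\<And>x y. \<forall>(j, k) \<in> model_index. AE z in \<mu>s j. U (x + y) j k z = U x j k z + U y j k z"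
    and Uscal: "\<And>c x. \<forall>(j, k) \<in> model_index. AE z in \<mu>s j. U (hscale c x) j k z = c * U x j k z"
    and Unorm: "\<And>x. model_norm2 \<mu>s (U x) = ennreal ((norm x)\<^sup>2)"
    and Uint: "\<And>x. \<forall>(j, k) \<in> model_index. AE z in \<mu>s j. U (A x) j k z = z * U x j k z"
    and msets: "\<And>j. j \<in> mult_indices \<Longrightarrow> sets (\<mu>s j) = sets borel"
begin

context
  fixes j k assumes jk: "(j, k) \<in> model_index"
begin

lemma j_mi: "j \<in> mult_indices" using jk unfolding model_index_def by auto

lemma Umeas: "U x j k \<in> borel_measurable (\<mu>s j)"
  using meas[of x] jk unfolding model_measurable_def by auto

lemma borel_to_mu: "f \<in> borel_measurable borel \<Longrightarrow> f \<in> borel_measurable (\<mu>s j)"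
  using measurable_cong_sets[OF msets[OF j_mi] refl] by blast

lemma U_add: "AE z in \<mu>s j. U (x + y) j k z = U x j k z + U y j k z"
  using Uadd[of x y] jk by auto
lemma U_scaleR: "AE z in \<mu>s j. U (r *\<^sub>R x) j k z = of_real r * U x j k z"
  using Uscal[of "of_real r" x] jk by (auto simp: hscale_of_real)
lemma U_A: "AE z in \<mu>s j. U (A x) j k z = z * U x j k z"
  using Uint[of x] jk by auto
lemma U_diff: "AE z in \<mu>s j. U (x - y) j k z = U x j k z - U y j k z"
  using U_add[of "x - y" y] by (auto elim!: AE_mp)

lemma U_pow: "AE z in \<mu>s j. U ((A ^^ m) g) j k z = z ^ m * U g j k z"
proof (induction m)
  case 0 then show ?case by simp
next
  case (Suc m)
  show ?case using Suc U_A[of "(A ^^ m) g"] by (auto elim!: AE_mp)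
qed

lemma U_0: "AE z in \<mu>s j. U 0 j k z = 0"
  using U_add[of 0 0] by (auto elim!: AE_mp)

lemma U_S: "AE z in \<mu>s j. U (S t g n) j k z = (\<Sum>m<n. complex_of_real (t ^ m / fact m) * z ^ m) * U g j k z"
proof (induction n)
  case 0 then show ?case using U_0 by (simp add: S_def)
next
  case (Suc n)
  have "S t g (Suc n) = S t g n + (t ^ n / fact n) *\<^sub>R (A ^^ n) g" by (simp add: S_def)
  then show ?case using Suc U_add[of "S t g n" "(t ^ n / fact n) *\<^sub>R (A ^^ n) g"]
      U_scaleR[of "t ^ n / fact n" "(A ^^ n) g"] U_pow[of n g]
    by (auto elim!: AE_mp simp: algebra_simps)
qed

lemma component_le: "(\<integral>\<^sup>+ z. ennreal ((cmod (U x j k z))\<^sup>2) \<partial>\<mu>s j) \<le> ennreal ((norm x)\<^sup>2)"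
proof -
  have "(\<integral>\<^sup>+ z. ennreal ((cmod (U x j k z))\<^sup>2) \<partial>\<mu>s j)
     \<le> (\<integral>\<^sup>+ p. (\<integral>\<^sup>+ z. ennreal ((cmod (U x (fst p) (snd p) z))\<^sup>2) \<partial>\<mu>s (fst p)) \<partial>count_space model_index)"
    using nn_integral_ge_point[OF jk, of "\<lambda>p. (\<integral>\<^sup>+ z. ennreal ((cmod (U x (fst p) (snd p) z))\<^sup>2) \<partial>\<mu>s (fst p))"]
    by simp
  also have "\<dots> = ennreal ((norm x)\<^sup>2)" using Unorm[of x] unfolding model_norm2_def .
  finally show ?thesis .
qed

lemma exp_partial: "(\<lambda>n. \<Sum>m<n. complex_of_real (t ^ m / fact m) * z ^ m) \<longlonglongrightarrow> exp (complex_of_real t * z)"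
proof -
  have "(\<lambda>m. (complex_of_real t * z) ^ m /\<^sub>R fact m) sums exp (complex_of_real t * z)"
    by (rule exp_converges)
  moreover have "(complex_of_real t * z) ^ m /\<^sub>R fact m = complex_of_real (t ^ m / fact m) * z ^ m" for m
    by (simp add: scaleR_conv_of_real power_mult_distrib field_simps)
  ultimately show ?thesis by (simp add: sums_def)
qed

lemma U_expA: "AE z in \<mu>s j. U (expA A t g) j k z = exp (complex_of_real t * z) * U g j k z"
proof -
  define F where "F = U (expA A t g) j k"
  define G where "G n = U (S t g n) j k" for n
  define H where "H z = exp (complex_of_real t * z) * U g j k z" for z
  have Fm: "F \<in> borel_measurable (\<mu>s j)" unfolding F_def by (rule Umeas)
  have Gm: "G n \<in> borel_measurable (\<mu>s j)" for n unfolding G_def by (rule Umeas)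
  have expm: "(\<lambda>z. exp (complex_of_real t * z)) \<in> borel_measurable (\<mu>s j)"
    by (intro borel_to_mu borel_measurable_continuous_onI continuous_intros)
  have Hm: "H \<in> borel_measurable (\<mu>s j)" unfolding H_def using expm Umeas by measurable
  define a where "a n = (\<integral>\<^sup>+ z. ennreal ((cmod (F z - G n z))\<^sup>2) \<partial>\<mu>s j)" for n
  have a_le: "a n \<le> ennreal ((norm (expA A t g - S t g n))\<^sup>2)" for n
  proof -
    have "a n = (\<integral>\<^sup>+ z. ennreal ((cmod (U (expA A t g - S t g n) j k z))\<^sup>2) \<partial>\<mu>s j)"
      unfolding a_def F_def G_def
      by (intro nn_integral_cong_AE) (use U_diff[of "expA A t g" "S t g n"] in \<open>auto elim!: AE_mp\<close>)
    also have "\<dots> \<le> ennreal ((norm (expA A t g - S t g n))\<^sup>2)" by (rule component_le)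
    finally show ?thesis .
  qed
  have b0: "(\<lambda>n. ennreal ((norm (expA A t g - S t g n))\<^sup>2)) \<longlonglongrightarrow> 0"
  proof -
    have "(\<lambda>n. expA A t g - S t g n) \<longlonglongrightarrow> expA A t g - expA A t g"
      by (intro tendsto_diff tendsto_const S_tendsto)
    hence "(\<lambda>n. ennreal ((norm (expA A t g - S t g n))\<^sup>2)) \<longlonglongrightarrow> ennreal ((norm (expA A t g - expA A t g))\<^sup>2)"
      by (intro tendsto_ennrealI tendsto_intros S_tendsto)
    thus ?thesis by simp
  qed
  have a0: "a \<longlonglongrightarrow> 0"
    by (rule tendsto_sandwich[of "\<lambda>_. 0" _ _ "\<lambda>n. ennreal ((norm (expA A t g - S t g n))\<^sup>2)"])
       (use a_le b0 in auto)
  have "(\<integral>\<^sup>+ z. liminf (\<lambda>n. ennreal ((cmod (F z - G n z))\<^sup>2)) \<partial>\<mu>s j) \<le> liminf a"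
    unfolding a_def by (rule nn_integral_liminf) (use Fm Gm in measurable)
  also have "liminf a = 0" using a0 by (simp add: lim_imp_Liminf)
  finally have i0: "(\<integral>\<^sup>+ z. liminf (\<lambda>n. ennreal ((cmod (F z - G n z))\<^sup>2)) \<partial>\<mu>s j) = 0" by simp
  have "AE z in \<mu>s j. \<forall>n. G n z = (\<Sum>m<n. complex_of_real (t ^ m / fact m) * z ^ m) * U g j k z"
    unfolding G_def using U_S by (simp add: AE_all_countable)
  hence "AE z in \<mu>s j. liminf (\<lambda>n. ennreal ((cmod (F z - G n z))\<^sup>2)) = ennreal ((cmod (F z - H z))\<^sup>2)"
  proof (rule AE_mp, intro AE_I2 impI)
    fix z assume G: "\<forall>n. G n z = (\<Sum>m<n. complex_of_real (t ^ m / fact m) * z ^ m) * U g j k z"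
    have Geq: "(\<lambda>n. G n z) = (\<lambda>n. (\<Sum>m<n. complex_of_real (t ^ m / fact m) * z ^ m) * U g j k z)"
      using G by simp
    have "(\<lambda>n. G n z) \<longlonglongrightarrow> H z"
      unfolding Geq H_def by (intro tendsto_mult exp_partial tendsto_const)
    hence "(\<lambda>n. ennreal ((cmod (F z - G n z))\<^sup>2)) \<longlonglongrightarrow> ennreal ((cmod (F z - H z))\<^sup>2)"
      by (intro tendsto_ennrealI tendsto_intros)
    thus "liminf (\<lambda>n. ennreal ((cmod (F z - G n z))\<^sup>2)) = ennreal ((cmod (F z - H z))\<^sup>2)"
      by (simp add: lim_imp_Liminf)
  qed
  note nn_integral_cong_AE[OF this]
  hence "(\<integral>\<^sup>+ z. ennreal ((cmod (F z - H z))\<^sup>2) \<partial>\<mu>s j) = 0"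
    using i0 by simp
  hence "AE z in \<mu>s j. ennreal ((cmod (F z - H z))\<^sup>2) = 0"
    by (subst nn_integral_0_iff_AE[symmetric]) (use Fm Hm in measurable)
  thus ?thesis unfolding F_def H_def by (auto elim!: AE_mp)
qed

lemma comp_bound:
  assumes re: "AE z in \<mu>s j. Re z \<le> -\<epsilon>" and t: "t \<ge> 0"
  shows "(\<integral>\<^sup>+ z. ennreal ((cmod (U (expA A t g) j k z))\<^sup>2) \<partial>\<mu>s j)
    \<le> ennreal (exp (-2 * \<epsilon> * t)) * (\<integral>\<^sup>+ z. ennreal ((cmod (U g j k z))\<^sup>2) \<partial>\<mu>s j)"
proof -
  have "(\<integral>\<^sup>+ z. ennreal ((cmod (U (expA A t g) j k z))\<^sup>2) \<partial>\<mu>s j)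
     \<le> (\<integral>\<^sup>+ z. ennreal (exp (-2 * \<epsilon> * t)) * ennreal ((cmod (U g j k z))\<^sup>2) \<partial>\<mu>s j)"
  proof (rule nn_integral_mono_AE)
    show "AE z in \<mu>s j. ennreal ((cmod (U (expA A t g) j k z))\<^sup>2)
        \<le> ennreal (exp (-2 * \<epsilon> * t)) * ennreal ((cmod (U g j k z))\<^sup>2)"
      using re U_expA[of t g]
    proof (eventually_elim)
      case (elim z)
      have "t * Re z \<le> t * (-\<epsilon>)" using elim(1) t by (rule mult_left_mono)
      hence "exp (t * Re z) ^ 2 \<le> exp (-2 * \<epsilon> * t)"
        by (simp add: exp_double[symmetric] power2_eq_square exp_add[symmetric] mult.commute)
      hence "(cmod (U (expA A t g) j k z))\<^sup>2 \<le> exp (-2 * \<epsilon> * t) * (cmod (U g j k z))\<^sup>2"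
        using elim(2) by (simp add: norm_mult norm_exp_eq_Re power_mult_distrib mult_right_mono)
      thus ?case by (simp add: ennreal_mult[symmetric] ennreal_leI)
    qed
  qed
  also have "\<dots> = ennreal (exp (-2 * \<epsilon> * t)) * (\<integral>\<^sup>+ z. ennreal ((cmod (U g j k z))\<^sup>2) \<partial>\<mu>s j)"
    by (rule nn_integral_cmult) (use Umeas in measurable)
  finally show ?thesis .
qed

end

lemma expA_bound:
  assumes re: "\<forall>j\<in>mult_indices. AE z in \<mu>s j. Re z \<le> -\<epsilon>" and t: "t \<ge> 0"
  shows "(norm (expA A t g))\<^sup>2 \<le> exp (-2 * \<epsilon> * t) * (norm g)\<^sup>2"
proof -
  have "ennreal ((norm (expA A t g))\<^sup>2) = model_norm2 \<mu>s (U (expA A t g))" by (simp add: Unorm)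
  also have "\<dots> \<le> (\<integral>\<^sup>+ p. ennreal (exp (-2 * \<epsilon> * t)) * (\<integral>\<^sup>+ z. ennreal ((cmod (U g (fst p) (snd p) z))\<^sup>2) \<partial>\<mu>s (fst p)) \<partial>count_space model_index)"
    unfolding model_norm2_def
  proof (rule nn_integral_mono)
    fix p assume "p \<in> space (count_space model_index)"
    then obtain j k where p: "p = (j, k)" "(j, k) \<in> model_index" by (cases p) auto
    have "j \<in> mult_indices" using p unfolding model_index_def by auto
    thus "(\<integral>\<^sup>+ z. ennreal ((cmod (U (expA A t g) (fst p) (snd p) z))\<^sup>2) \<partial>\<mu>s (fst p))
      \<le> ennreal (exp (-2 * \<epsilon> * t)) * (\<integral>\<^sup>+ z. ennreal ((cmod (U g (fst p) (snd p) z))\<^sup>2) \<partial>\<mu>s (fst p))"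
      using comp_bound[OF p(2) _ t] re p by simp
  qed
  also have "\<dots> = ennreal (exp (-2 * \<epsilon> * t)) * model_norm2 \<mu>s (U g)"
    unfolding model_norm2_def by (rule nn_integral_cmult) (rule borel_measurable_count_space)
  also have "\<dots> = ennreal (exp (-2 * \<epsilon> * t) * (norm g)\<^sup>2)" by (simp add: Unorm ennreal_mult)
  finally show ?thesis by (simp add: ennreal_le_iff)
qed

end

lemma exp_set_integral:
  assumes "a > 0" "b \<ge> 0"
  shows "(\<integral>\<^sup>+ t\<in>{0..}. ennreal (exp (-a * t) * b) \<partial>lborel) = ennreal (b / a)"
proof -
  have "(\<integral>\<^sup>+ t\<in>{0..}. ennreal (exp (-a * t) * b) \<partial>lborel)
      = (\<integral>\<^sup>+ t. ennreal (indicator {0..} t * (exp (-a * t) * b)) \<partial>lborel)"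
    by (intro nn_integral_cong) (auto simp: indicator_def)
  also have "\<dots> = ennreal (b / a)"
  proof (rule nn_integral_has_integral_lborel)
    show "(\<lambda>t. indicator {0..} t * (exp (-a * t) * b)) \<in> borel_measurable borel"
      by measurable
    show "0 \<le> indicator {0..} t * (exp (-a * t) * b)" for t :: real
      using assms by (auto simp: indicator_def)
    have "((\<lambda>x. exp (-a * x) * b) has_integral exp (-a * 0) / a * b) {0..}"
      using has_integral_exp_minus_to_infinity[OF assms(1), of 0] by (rule has_integral_mult_left)
    hence "((\<lambda>x. if x \<in> {0..} then exp (-a * x) * b else 0) has_integral b / a) UNIV"
      by (subst has_integral_restrict_UNIV) simp
    thus "((\<lambda>t. indicator {0..} t * (exp (-a * t) * b)) has_integral b / a) UNIV"
      by (rule has_integral_eq[rotated]) (auto simp: indicator_def)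
  qed
  finally show ?thesis .
qed

theorem mainTheorem15:
  fixes A :: "'a::chilbert \<Rightarrow> 'a"
    and \<mu> :: "complex measure"
    and G :: "'a set"
  assumes "separable_hilbert TYPE('a)"
    and "infinite_dimensional TYPE('a)"
    and "bounded_clinear_op A"
    and "normal_op A"
    and "scalar_spectral_measure A \<mu>"
    and "finite G"
    and "semi_continuous_frame A G {0..}"
  shows "\<forall>\<epsilon>>0. emeasure \<mu> {z. Re z > - \<epsilon>} > 0"
proof (intro allI impI, rule ccontr)
  fix \<epsilon> :: real
  assume eps: "\<epsilon> > 0" and nz: "\<not> emeasure \<mu> {z. Re z > - \<epsilon>} > 0"
  define N where "N = {z. Re z > - \<epsilon>}"
  have Nb: "N \<in> sets borel" unfolding N_def by (intro borel_open open_halfspace_Re_gt)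
  have N0: "emeasure \<mu> N = 0" using nz unfolding N_def by (simp add: not_gr_zero)
  obtain \<mu>s where mi: "\<forall>j \<in> mult_indices. finite_measure (\<mu>s j) \<and> sets (\<mu>s j) = sets borel"
    and ue: "unitarily_equivalent_model A \<mu>s"
    and nul: "\<forall>\<Delta> \<in> sets borel. emeasure \<mu> \<Delta> = 0 \<longleftrightarrow> (\<forall>j \<in> mult_indices. emeasure (\<mu>s j) \<Delta> = 0)"
    using assms(5) unfolding scalar_spectral_measure_def by blast
  obtain U where
    U1: "\<forall>x. model_measurable \<mu>s (U x)" and
    U2: "\<forall>x y. \<forall>(j, k) \<in> model_index. AE z in \<mu>s j. U (x + y) j k z = U x j k z + U y j k z" and
    U3: "\<forall>c x. \<forall>(j, k) \<in> model_index. AE z in \<mu>s j. U (hscale c x) j k z = c * U x j k z" and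
    U4: "\<forall>x. model_norm2 \<mu>s (U x) = ennreal ((norm x)\<^sup>2)" and
    U6: "\<forall>x. \<forall>(j, k) \<in> model_index. AE z in \<mu>s j. U (A x) j k z = z * U x j k z"
    using ue unfolding unitarily_equivalent_model_def by blast
  interpret model A \<mu>s U
    by unfold_locales (use assms(3) U1 U2 U3 U4 U6 mi in auto)
  have re: "\<forall>j\<in>mult_indices. AE z in \<mu>s j. Re z \<le> -\<epsilon>"
  proof
    fix j assume j: "j \<in> mult_indices"
    have "emeasure (\<mu>s j) N = 0" using nul Nb N0 j by blast
    moreover have "N \<in> sets (\<mu>s j)" using Nb msets[OF j] by simp
    ultimately have "N \<in> null_sets (\<mu>s j)" by (simp add: null_sets_def)
    thus "AE z in \<mu>s j. Re z \<le> -\<epsilon>"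
      by (rule AE_I') (auto simp: N_def)
  qed
  obtain c where c: "c > 0" and low: "\<And>f. ennreal (c * (norm f)\<^sup>2)
          \<le> (\<Sum>g\<in>G. \<integral>\<^sup>+ t\<in>{0..}. ennreal ((cmod (hinner f (expA A t g)))\<^sup>2) \<partial>lborel)"
    using assms(7) unfolding semi_continuous_frame_def by blast
  define B where "B = (\<Sum>g\<in>G. (norm g)\<^sup>2 / (2 * \<epsilon>))"
  have B0: "B \<ge> 0" unfolding B_def using eps by (intro sum_nonneg) auto
  have key: "c * real n \<le> B" for n
  proof -
    obtain e :: "nat \<Rightarrow> 'a" where e: "orthonormal e n"
      using orthonormal_exists[OF assms(2)] by blast
    have "ennreal (c * real n) = (\<Sum>k<n. ennreal (c * (norm (e k))\<^sup>2))"
      using orthonormal_norm[OF e] c by (simp add: ennreal_mult ennreal_of_nat_eq_real_of_nat mult.commute)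
    also have "\<dots> \<le> (\<Sum>k<n. \<Sum>g\<in>G. \<integral>\<^sup>+ t\<in>{0..}. ennreal ((cmod (hinner (e k) (expA A t g)))\<^sup>2) \<partial>lborel)"
      by (intro sum_mono low)
    also have "\<dots> = (\<Sum>g\<in>G. \<Sum>k<n. \<integral>\<^sup>+ t\<in>{0..}. ennreal ((cmod (hinner (e k) (expA A t g)))\<^sup>2) \<partial>lborel)"
      by (rule sum.swap)
    also have "\<dots> = (\<Sum>g\<in>G. \<integral>\<^sup>+ t. (\<Sum>k<n. ennreal ((cmod (hinner (e k) (expA A t g)))\<^sup>2) * indicator {0..} t) \<partial>lborel)"
      by (intro sum.cong refl nn_integral_sum[symmetric]) (use integrand_measurable in measurable)
    also have "\<dots> \<le> (\<Sum>g\<in>G. \<integral>\<^sup>+ t\<in>{0..}. ennreal (exp (- (2 * \<epsilon>) * t) * (norm g)\<^sup>2) \<partial>lborel)"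
    proof (intro sum_mono nn_integral_mono)
      fix g t
      show "(\<Sum>k<n. ennreal ((cmod (hinner (e k) (expA A t g)))\<^sup>2) * indicator {0..} t)
          \<le> ennreal (exp (- (2 * \<epsilon>) * t) * (norm g)\<^sup>2) * indicator {0..} t"
      proof (cases "t \<ge> 0")
        case True
        have "(\<Sum>k<n. ennreal ((cmod (hinner (e k) (expA A t g)))\<^sup>2))
            = ennreal (\<Sum>k<n. (cmod (hinner (expA A t g) (e k)))\<^sup>2)"
          by (subst sum_ennreal) (auto intro!: arg_cong[where f=ennreal] sum.cong
              simp: hinner_commute[of "e _" "expA A t g"])
        also have "\<dots> \<le> ennreal ((norm (expA A t g))\<^sup>2)"
          by (intro ennreal_leI bessel e)
        also have "\<dots> \<le> ennreal (exp (- (2 * \<epsilon>) * t) * (norm g)\<^sup>2)"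
          using expA_bound[OF re True, of g] by (intro ennreal_leI) simp
        finally show ?thesis using True by simp
      qed simp
    qed
    also have "\<dots> = (\<Sum>g\<in>G. ennreal ((norm g)\<^sup>2 / (2 * \<epsilon>)))"
      using eps by (intro sum.cong refl exp_set_integral) auto
    also have "\<dots> = ennreal B" unfolding B_def by (rule sum_ennreal) (use eps in auto)
    finally show ?thesis using B0 by (simp add: ennreal_le_iff)
  qed
  define n where "n = nat (ceiling (B / c)) + 1"
  have "B / c < real n" unfolding n_def by linarith
  hence "B < c * real n" using c by (simp add: divide_less_eq mult.commute)
  with key[of n] show False by simp
qed

end
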